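(* Let $g\ge2$ and $\Sigma_g=\{(z,w)\in(\mathbb{C}\cup\{\infty\})^2: w^{g+1}=z^g(z+1)(z-1)\}$. Let $\eta_1=\frac{dz}{w(z-1)}$, $\eta_2=\frac{w\,dz}{(z+1)(z-1)}$, $\eta_3=\frac{dz}{w(z+1)}$, and for $a_0,a_1,b_0,b_1\in\mathbb{C}$ and nonzero $\alpha,\beta,\gamma\in\mathbb{C}$ set $$\phi_1=\Big(a_0+a_1\big(\tfrac zw\big)^{g-1}\Big)\tfrac{dz}{w}+\alpha\eta_1+\beta\eta_2,\quad \phi_2=\Big(ia_0-ia_1\big(\tfrac zw\big)^{g-1}\Big)\tfrac{dz}{w}+i\alpha\eta_1-i\beta\eta_2,$$ $$\phi_3=\Big(b_0+b_1\big(\tfrac zw\big)^{g-1}\Big)\tfrac{dz}{w}+\beta\eta_2+\gamma\eta_3,\quad \phi_4=\Big(-ib_0+ib_1\big(\tfrac zw\big)^{g-1}\Big)\tfrac{dz}{w}+i\beta\eta_2-i\gamma\eta_3.$$ Then $\sum_{j=1}^4\phi_j^2\equiv0$ if and only if $a_0=-b_0=\frac{\alpha+\gamma}{2}$ and $a_1=-b_1=-\beta$.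
   Context: $\Sigma_g$ denotes the compact Riemann surface (of genus $g$) defined by the given equation, with a single point at $z=\infty$. *)

theory Defs
  imports Complex_Main
begin

text \<open>Every meromorphic 1-form below is
written as (coefficient function) * dz; the coefficient is evaluated at points
(z,w) of the affine part of the curve with w \<noteq> 0 (this is a dense open subset
of the compact surface, on which all forms are holomorphic; there z \<noteq> 0, \<plusminus>1).\<close>

definition on_curve :: "nat \<Rightarrow> complex \<Rightarrow> complex \<Rightarrow> bool" where
  "on_curve g z w \<longleftrightarrow> w ^ (g + 1) = z ^ g * (z + 1) * (z - 1)"

definition eta1 :: "complex \<Rightarrow> complex \<Rightarrow> complex" where
  "eta1 z w = 1 / (w * (z - 1))"
definition eta2 :: "complex \<Rightarrow> complex \<Rightarrow> complex" where
  "eta2 z w = w / ((z + 1) * (z - 1))"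
definition eta3 :: "complex \<Rightarrow> complex \<Rightarrow> complex" where
  "eta3 z w = 1 / (w * (z + 1))"

definition phi1 :: "nat \<Rightarrow> complex \<Rightarrow> complex \<Rightarrow> complex \<Rightarrow> complex \<Rightarrow> complex \<Rightarrow> complex \<Rightarrow> complex" where
  "phi1 g a0 a1 \<alpha> \<beta> z w =
     (a0 + a1 * (z / w) ^ (g - 1)) * (1 / w) + \<alpha> * eta1 z w + \<beta> * eta2 z w"
definition phi2 :: "nat \<Rightarrow> complex \<Rightarrow> complex \<Rightarrow> complex \<Rightarrow> complex \<Rightarrow> complex \<Rightarrow> complex \<Rightarrow> complex" where
  "phi2 g a0 a1 \<alpha> \<beta> z w =
     (\<i> * a0 - \<i> * a1 * (z / w) ^ (g - 1)) * (1 / w) + \<i> * \<alpha> * eta1 z w - \<i> * \<beta> * eta2 z w"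
definition phi3 :: "nat \<Rightarrow> complex \<Rightarrow> complex \<Rightarrow> complex \<Rightarrow> complex \<Rightarrow> complex \<Rightarrow> complex \<Rightarrow> complex" where
  "phi3 g b0 b1 \<beta> \<gamma> z w =
     (b0 + b1 * (z / w) ^ (g - 1)) * (1 / w) + \<beta> * eta2 z w + \<gamma> * eta3 z w"
definition phi4 :: "nat \<Rightarrow> complex \<Rightarrow> complex \<Rightarrow> complex \<Rightarrow> complex \<Rightarrow> complex \<Rightarrow> complex \<Rightarrow> complex" where
  "phi4 g b0 b1 \<beta> \<gamma> z w =
     (- \<i> * b0 + \<i> * b1 * (z / w) ^ (g - 1)) * (1 / w) + \<i> * \<beta> * eta2 z w - \<i> * \<gamma> * eta3 z w"

end

theory Submission
  imports Defs
begin

definition GG :: "complex \<Rightarrow> complex \<Rightarrow> complex \<Rightarrow> complex \<Rightarrow> complex \<Rightarrow> complex \<Rightarrow> complex \<Rightarrow> complex \<Rightarrow> complex" where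
  "GG a0 a1 b0 b1 \<alpha> \<beta> \<gamma> z = (a0*(z-1)+\<alpha>)*(a1+\<beta>*z)*(z+1) + (b0*(z+1)+\<gamma>)*(b1+\<beta>*z)*(z-1)"

lemma h1: fixes x y u w :: complex shows "u \<noteq> 0 \<Longrightarrow> w \<noteq> 0 \<Longrightarrow> x/w + y*(1/(w*u)) = (x*u+y)/(w*u)"
  by (simp add: field_simps)
lemma h2: fixes a b z q w :: complex shows "q \<noteq> 0 \<Longrightarrow> z \<noteq> 0 \<Longrightarrow> w \<noteq> 0 \<Longrightarrow> a*(w^2/(z*q))/w + b*(w/q) = w*(a+b*z)/(z*q)"
  by (simp add: field_simps power2_eq_square)

lemma key:
  fixes z w :: complex
  assumes z0: "z \<noteq> 0" and z1: "z \<noteq> 1" and z2: "z \<noteq> -1" and w0: "w \<noteq> 0"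
    and ht: "(z/w)^(g-1) = w^2/(z*((z-1)*(z+1)))"
  shows "(phi1 g a0 a1 \<alpha> \<beta> z w)\<^sup>2 + (phi2 g a0 a1 \<alpha> \<beta> z w)\<^sup>2
          + (phi3 g b0 b1 \<beta> \<gamma> z w)\<^sup>2 + (phi4 g b0 b1 \<beta> \<gamma> z w)\<^sup>2
         = 4 * GG a0 a1 b0 b1 \<alpha> \<beta> \<gamma> z / (z*(z-1)^2*(z+1)^2)"
proof -
  have a: "z - 1 \<noteq> 0" using z1 by simp
  have b: "z + 1 \<noteq> 0"
  proof
    assume "z + 1 = 0" then have "z = -1" by (simp add: eq_neg_iff_add_eq_0)
    with z2 show False by simp
  qed
  have b': "1 + z \<noteq> 0" using b by (simp add: add.commute)
  have q: "(z-1)*(z+1) \<noteq> 0" using a b by simp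
  define t where "t = (z/w)^(g-1)"
  define A where "A = a0/w + \<alpha>*eta1 z w"
  define B where "B = a1*t/w + \<beta>*eta2 z w"
  define C where "C = b0/w + \<gamma>*eta3 z w"
  define D where "D = b1*t/w + \<beta>*eta2 z w"
  have 1: "phi1 g a0 a1 \<alpha> \<beta> z w = A + B"
    unfolding phi1_def A_def B_def t_def by (simp add: algebra_simps)
  have 2: "phi2 g a0 a1 \<alpha> \<beta> z w = \<i>*(A - B)"
    unfolding phi2_def A_def B_def t_def by (simp add: algebra_simps)
  have 3: "phi3 g b0 b1 \<beta> \<gamma> z w = C + D"
    unfolding phi3_def C_def D_def t_def by (simp add: algebra_simps)
  have 4: "phi4 g b0 b1 \<beta> \<gamma> z w = \<i>*(D - C)"
    unfolding phi4_def C_def D_def t_def by (simp add: algebra_simps)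
  have S: "(A+B)^2 + (\<i>*(A-B))^2 + (C+D)^2 + (\<i>*(D-C))^2 = 4*(A*B + C*D)"
    by (simp add: power2_eq_square algebra_simps)
  have tt: "t = w^2/(z*((z-1)*(z+1)))" using ht t_def by simp
  have A': "A = (a0*(z-1)+\<alpha>)/(w*(z-1))"
    unfolding A_def eta1_def using h1[OF a w0] by simp
  have C': "C = (b0*(z+1)+\<gamma>)/(w*(z+1))"
    unfolding C_def eta3_def using h1[OF b w0] by simp
  have B': "B = w*(a1+\<beta>*z)/(z*((z-1)*(z+1)))"
    unfolding B_def eta2_def tt mult.commute[of "z+1" "z-1"] by (rule h2[OF q z0 w0])
  have D': "D = w*(b1+\<beta>*z)/(z*((z-1)*(z+1)))"
    unfolding D_def eta2_def tt mult.commute[of "z+1" "z-1"] by (rule h2[OF q z0 w0])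
  have E: "A*B + C*D = GG a0 a1 b0 b1 \<alpha> \<beta> \<gamma> z / (z*(z-1)^2*(z+1)^2)"
    unfolding A' B' C' D' GG_def using a b w0 z0
    by (simp add: divide_simps power2_eq_square)
  show ?thesis using S E 1 2 3 4 by simp
qed


lemma GG_id:
  fixes a0 a1 b0 b1 \<alpha> \<beta> \<gamma> :: complex
  defines "p \<equiv> GG a0 a1 b0 b1 \<alpha> \<beta> \<gamma>"
  shows "p 0 = 10*p 2 - 20*p 3 + 15*p 4 - 4*p 5"
    and "p 1 = 4*p 2 - 6*p 3 + 4*p 4 - p 5"
    and "p (-1) = 20*p 2 - 45*p 3 + 36*p 4 - 10*p 5"
    and "p 5 - 3*p 4 + 3*p 3 - p 2 = 6*\<beta>*(a0+b0)"
  unfolding p_def GG_def by (simp_all add: algebra_simps)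

lemma ex_root:
  fixes c :: complex
  assumes "n > 0"
  shows "\<exists>w. w ^ n = c"
proof -
  have "(rcis (root n (cmod c)) (Arg c / real n)) ^ n = rcis ((root n (cmod c))^n) (real n * (Arg c / real n))"
    by (rule DeMoivre2)
  also have "\<dots> = c" using assms by (simp add: rcis_cmod_Arg)
  finally show ?thesis by blast
qed

lemma curve_facts:
  fixes z w :: complex
  assumes "on_curve g z w" "w \<noteq> 0" "g \<ge> 1"
  shows "z \<noteq> 0" "z \<noteq> 1" "z \<noteq> -1" "(z/w)^(g-1) = w^2/(z*((z-1)*(z+1)))"
proof -
  have e: "w ^ (g + 1) = z ^ g * (z + 1) * (z - 1)" using assms(1) unfolding on_curve_def .
  have nz: "z ^ g * (z + 1) * (z - 1) \<noteq> 0" using e assms(2) by (metis power_not_zero)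
  show z0: "z \<noteq> 0" using nz assms(3) by auto
  show "z \<noteq> 1" using nz by auto
  show "z \<noteq> -1" proof assume "z = -1" with nz show False by simp qed
  obtain k where k: "g = Suc k" using assms(3) by (cases g) auto
  have e2: "w^k * w^2 = z * z^k * ((z - 1) * (z + 1))"
    using e unfolding k by (simp add: power2_eq_square algebra_simps)
  have wk: "w^k \<noteq> 0" using assms(2) by simp
  have zk: "z^k \<noteq> 0" using z0 by simp
  have "(z/w)^(g-1) = z^k / w^k" unfolding k by (simp add: power_divide)
  also have "\<dots> = w^2/(z*((z-1)*(z+1)))"
    using e2 wk zk z0 nz by (simp add: divide_simps) (metis mult.commute mult.left_commute)
  finally show "(z/w)^(g-1) = w^2/(z*((z-1)*(z+1)))" .
qed

theorem lemma7p11: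
  fixes g :: nat and a0 a1 b0 b1 \<alpha> \<beta> \<gamma> :: complex
  assumes "g \<ge> 2" and "\<alpha> \<noteq> 0" and "\<beta> \<noteq> 0" and "\<gamma> \<noteq> 0"
  shows "(\<forall>z w. on_curve g z w \<and> w \<noteq> 0 \<longrightarrow>
            (phi1 g a0 a1 \<alpha> \<beta> z w)\<^sup>2 + (phi2 g a0 a1 \<alpha> \<beta> z w)\<^sup>2
          + (phi3 g b0 b1 \<beta> \<gamma> z w)\<^sup>2 + (phi4 g b0 b1 \<beta> \<gamma> z w)\<^sup>2 = 0)
     \<longleftrightarrow> (a0 = (\<alpha> + \<gamma>) / 2 \<and> b0 = - a0 \<and> a1 = - \<beta> \<and> b1 = - a1)"
proof
  assume H: "\<forall>z w. on_curve g z w \<and> w \<noteq> 0 \<longrightarrow>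
            (phi1 g a0 a1 \<alpha> \<beta> z w)\<^sup>2 + (phi2 g a0 a1 \<alpha> \<beta> z w)\<^sup>2
          + (phi3 g b0 b1 \<beta> \<gamma> z w)\<^sup>2 + (phi4 g b0 b1 \<beta> \<gamma> z w)\<^sup>2 = 0"
  let ?p = "GG a0 a1 b0 b1 \<alpha> \<beta> \<gamma>"
  have P: "?p z = 0" if z0: "z \<noteq> 0" and z1: "z \<noteq> 1" and z2: "z \<noteq> -1" for z
  proof -
    obtain w where w: "w ^ (g+1) = z ^ g * (z + 1) * (z - 1)"
      using ex_root[of "g+1" "z ^ g * (z + 1) * (z - 1)"] by auto
    have zp: "z + 1 \<noteq> 0"
    proof
      assume "z + 1 = 0" then have "z = -1" by (simp add: eq_neg_iff_add_eq_0)
      with z2 show False by simp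
    qed
    have zm: "z - 1 \<noteq> 0" using z1 by simp
    have nz: "z ^ g * (z + 1) * (z - 1) \<noteq> 0" using z0 zm zp by (simp only: mult_eq_0_iff power_eq_0_iff de_Morgan_disj) simp
    have w0: "w \<noteq> 0" using w nz by auto
    have oc: "on_curve g z w" unfolding on_curve_def using w .
    have "(z/w)^(g-1) = w^2/(z*((z-1)*(z+1)))" using curve_facts(4)[OF oc w0] assms(1) by simp
    note kk = key[OF z0 z1 z2 w0 this, of a0 a1 \<alpha> \<beta> b0 b1 \<gamma>]
    have S0: "(phi1 g a0 a1 \<alpha> \<beta> z w)\<^sup>2 + (phi2 g a0 a1 \<alpha> \<beta> z w)\<^sup>2
          + (phi3 g b0 b1 \<beta> \<gamma> z w)\<^sup>2 + (phi4 g b0 b1 \<beta> \<gamma> z w)\<^sup>2 = 0"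
      using H oc w0 by blast
    have "4 * ?p z / (z*(z-1)^2*(z+1)^2) = 0" using kk S0 by metis
    moreover have "z*(z-1)^2*(z+1)^2 \<noteq> 0" using z0 zm zp by (simp only: mult_eq_0_iff power_eq_0_iff de_Morgan_disj) simp
    ultimately show ?thesis by simp
  qed
  have p2: "?p 2 = 0" and p3: "?p 3 = 0" and p4: "?p 4 = 0" and p5: "?p 5 = 0"
    by (rule P; simp)+
  have q0: "?p 0 = 0" and q1: "?p 1 = 0" and qm: "?p (-1) = 0" and ql: "6*\<beta>*(a0+b0) = 0"
    using GG_id[of a0 a1 b0 b1 \<alpha> \<beta> \<gamma>] p2 p3 p4 p5 by simp_all
  have r1: "2*\<alpha>*(a1+\<beta>) = 0" using q1 unfolding GG_def by (simp add: algebra_simps)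
  have "a1 + \<beta> = 0" using r1 assms(2) by simp
  hence A1: "a1 = -\<beta>" by (simp add: eq_neg_iff_add_eq_0)
  have rm: "-2*\<gamma>*(b1-\<beta>) = 0" using qm unfolding GG_def by (simp add: algebra_simps)
  have B1: "b1 = \<beta>" using rm assms(4) by simp
  have "b0 + a0 = 0" using ql assms(3) by (simp add: add.commute)
  hence B0: "b0 = -a0" by (simp add: eq_neg_iff_add_eq_0)
  have r0: "(\<alpha>-a0)*a1 - (b0+\<gamma>)*b1 = 0" using q0 unfolding GG_def by (simp add: algebra_simps)
  hence "\<beta> * (2*a0 - \<alpha> - \<gamma>) = 0" using A1 B1 B0 by (simp add: algebra_simps)
  hence e0: "2*a0 - \<alpha> - \<gamma> = 0" using assms(3) by simp
  have "a0*2 = (2*a0 - \<alpha> - \<gamma>) + (\<alpha>+\<gamma>)" by (simp add: algebra_simps)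
  hence e1: "a0*2 = \<alpha>+\<gamma>" using e0 by simp
  have A0: "a0 = (\<alpha>+\<gamma>)/2" using e1 by (simp add: field_simps)
  show "a0 = (\<alpha> + \<gamma>) / 2 \<and> b0 = - a0 \<and> a1 = - \<beta> \<and> b1 = - a1"
    using A0 B0 A1 B1 by simp
next
  assume C: "a0 = (\<alpha> + \<gamma>) / 2 \<and> b0 = - a0 \<and> a1 = - \<beta> \<and> b1 = - a1"
  then have c1: "a0 = (\<alpha> + \<gamma>) / 2" and c2: "b0 = - ((\<alpha> + \<gamma>) / 2)" and c3: "a1 = - \<beta>" and c4: "b1 = \<beta>"
    by auto
  have G0: "GG a0 a1 b0 b1 \<alpha> \<beta> \<gamma> z = 0" for z
    unfolding GG_def c1 c2 c3 c4 by (simp add: field_simps)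
  show "\<forall>z w. on_curve g z w \<and> w \<noteq> 0 \<longrightarrow>
            (phi1 g a0 a1 \<alpha> \<beta> z w)\<^sup>2 + (phi2 g a0 a1 \<alpha> \<beta> z w)\<^sup>2
          + (phi3 g b0 b1 \<beta> \<gamma> z w)\<^sup>2 + (phi4 g b0 b1 \<beta> \<gamma> z w)\<^sup>2 = 0"
  proof (intro allI impI, elim conjE)
    fix z w assume oc: "on_curve g z w" and w0: "w \<noteq> 0"
    have g1: "g \<ge> 1" using assms(1) by simp
    note cf = curve_facts[OF oc w0 g1]
    show "(phi1 g a0 a1 \<alpha> \<beta> z w)\<^sup>2 + (phi2 g a0 a1 \<alpha> \<beta> z w)\<^sup>2
          + (phi3 g b0 b1 \<beta> \<gamma> z w)\<^sup>2 + (phi4 g b0 b1 \<beta> \<gamma> z w)\<^sup>2 = 0"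
      using key[OF cf(1) cf(2) cf(3) w0 cf(4)] G0[of z] by (metis mult_zero_right div_0)
  qed
qed

end
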